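(* Let $\Lambda\colon L\times W\to[0,\infty]$ and $\Lambda'\colon L'\times W'\to[0,\infty]$ be Dowker dissimilarities that are $(\alpha,\alpha')$-interleaved (as Dowker dissimilarities). Then the Dowker nerves $N\Lambda$ and $N\Lambda'$ are $(\alpha,\alpha')$-interleaved filtered simplicial complexes.
   Context: A Dowker dissimilarity is a function $\Lambda\colon L\times W\to[0,\infty]$ for sets $L,W$. Its Dowker nerve $N\Lambda$ is the filtered simplicial complex with vertex set $L$ whose level $t\in[0,\infty]$ is $N\Lambda_t=\{\text{finite }\sigma\subseteq L\mid \exists w\in W \text{ with }\Lambda(l,w)<t\ \forall l\in\sigma\}$. Let $\alpha,\alpha'\colon[0,\infty]\to[0,\infty]$ be order preserving with $t\le\alpha(t)$, $t\le\alpha'(t)$ for all $t$. An $(\alpha,\alpha')$-interleaving of Dowker dissimilarities $\Lambda,\Lambda'$ is a pair of relations $C\subseteq L\times L'$, $C'\subseteq L'\times L$ such that: (i) for every $t$ and every nonempty $\sigma\in N\Lambda_t$, the set $C(\sigma)=\{l'\mid\exists l\in\sigma,(l,l')\in C\}$ is finite, nonempty and lies in $N\Lambda'_{\alpha(t)}$; (ii) for every $t$ and every nonempty $\tau\in N\Lambda'_t$, $C'(\tau)$ is finite, nonempty and lies in $N\Lambda_{\alpha'(t)}$; (iii) $\Delta_L\subseteq C'\circ C$ and $\Delta_{L'}\subseteq C\circ C'$, where $C'\circ C=\{(l,m)\mid\exists l':(l,l')\in C,(l',m)\in C'\}$ and $\Delta$ denotes the diagonal. Filtered simplicial complexes $K,K'$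 (i.e. $K(s)\subseteq K(t)$ subcomplexes for $s\le t$) are $(\alpha,\alpha')$-interleaved if there are continuous maps $F_t\colon|K(t)|\to|K'(\alpha(t))|$ and $G_t\colon|K'(t)|\to|K(\alpha'(t))|$ for all $t$ ($|\cdot|$ = geometric realization) such that for $s\le t$, $F_t$ composed with the inclusion $|K(s)|\to|K(t)|$ is homotopic to $F_s$ composed with the inclusion $|K'(\alpha(s))|\to|K'(\alpha(t))|$ (and likewise for $G$), $G_{\alpha(t)}\circ F_t$ is homotopic to the inclusion $|K(t)|\to|K(\alpha'(\alpha(t)))|$, and $F_{\alpha'(t)}\circ G_t$ is homotopic to the inclusion $|K'(t)|\to|K'(\alpha(\alpha'(t)))|$. *)

theory Defs
  imports "HOL-Analysis.Analysis" "HOL-Library.Extended_Nonnegative_Real"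
begin

definition dowker_nerve :: "('l \<Rightarrow> 'w \<Rightarrow> ennreal) \<Rightarrow> ennreal \<Rightarrow> 'l set set" where
  "dowker_nerve \<Lambda> t = {\<sigma>. finite \<sigma> \<and> (\<exists>w. \<forall>l\<in>\<sigma>. \<Lambda> l w < t)}"

definition dowker_interleaving ::
  "('l \<Rightarrow> 'w \<Rightarrow> ennreal) \<Rightarrow> ('l2 \<Rightarrow> 'w2 \<Rightarrow> ennreal)
   \<Rightarrow> (ennreal \<Rightarrow> ennreal) \<Rightarrow> (ennreal \<Rightarrow> ennreal)
   \<Rightarrow> ('l \<times> 'l2) set \<Rightarrow> ('l2 \<times> 'l) set \<Rightarrow> bool" where
  "dowker_interleaving \<Lambda> \<Lambda>' \<alpha> \<alpha>' C C' \<longleftrightarrow>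
     (\<forall>t. \<forall>\<sigma>\<in>dowker_nerve \<Lambda> t. \<sigma> \<noteq> {} \<longrightarrow>
        finite (C `` \<sigma>) \<and> C `` \<sigma> \<noteq> {} \<and> C `` \<sigma> \<in> dowker_nerve \<Lambda>' (\<alpha> t)) \<and>
     (\<forall>t. \<forall>\<tau>\<in>dowker_nerve \<Lambda>' t. \<tau> \<noteq> {} \<longrightarrow>
        finite (C' `` \<tau>) \<and> C' `` \<tau> \<noteq> {} \<and> C' `` \<tau> \<in> dowker_nerve \<Lambda> (\<alpha>' t)) \<and>
     Id \<subseteq> C O C' \<and> Id \<subseteq> C' O C"

definition dowker_interleaved ::
  "('l \<Rightarrow> 'w \<Rightarrow> ennreal) \<Rightarrow> ('l2 \<Rightarrow> 'w2 \<Rightarrow> ennreal)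
   \<Rightarrow> (ennreal \<Rightarrow> ennreal) \<Rightarrow> (ennreal \<Rightarrow> ennreal) \<Rightarrow> bool" where
  "dowker_interleaved \<Lambda> \<Lambda>' \<alpha> \<alpha>' \<longleftrightarrow> (\<exists>C C'. dowker_interleaving \<Lambda> \<Lambda>' \<alpha> \<alpha>' C C')"

text \<open>Closed geometric simplex spanned by a finite vertex set, as barycentric coordinate functions.\<close>
definition geom_simplex :: "'a set \<Rightarrow> ('a \<Rightarrow> real) set" where
  "geom_simplex \<sigma> = {f. (\<forall>x. 0 \<le> f x) \<and> (\<forall>x. x \<notin> \<sigma> \<longrightarrow> f x = 0) \<and> sum f \<sigma> = 1}"

definition realization_carrier :: "'a set set \<Rightarrow> ('a \<Rightarrow> real) set" where
  "realization_carrier K = (\<Union>\<sigma>\<in>K. geom_simplex \<sigma>)"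

text \<open>Geometric realization with the weak (coherent) topology w.r.t. the closed simplices.\<close>
definition realization :: "'a set set \<Rightarrow> ('a \<Rightarrow> real) topology" where
  "realization K = topology (\<lambda>U. U \<subseteq> realization_carrier K \<and>
      (\<forall>\<sigma>\<in>K. openin (subtopology euclidean (geom_simplex \<sigma>)) (U \<inter> geom_simplex \<sigma>)))"

definition filtered_interleaved ::
  "(ennreal \<Rightarrow> 'a set set) \<Rightarrow> (ennreal \<Rightarrow> 'b set set)
   \<Rightarrow> (ennreal \<Rightarrow> ennreal) \<Rightarrow> (ennreal \<Rightarrow> ennreal) \<Rightarrow> bool" where
  "filtered_interleaved K K' \<alpha> \<alpha>' \<longleftrightarrow>
    (\<exists>F G.
      (\<forall>t. continuous_map (realization (K t)) (realization (K' (\<alpha> t))) (F t)) \<and>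
      (\<forall>t. continuous_map (realization (K' t)) (realization (K (\<alpha>' t))) (G t)) \<and>
      (\<forall>s t. s \<le> t \<longrightarrow>
         homotopic_with (\<lambda>_. True) (realization (K s)) (realization (K' (\<alpha> t))) (F t) (F s)) \<and>
      (\<forall>s t. s \<le> t \<longrightarrow>
         homotopic_with (\<lambda>_. True) (realization (K' s)) (realization (K (\<alpha>' t))) (G t) (G s)) \<and>
      (\<forall>t. homotopic_with (\<lambda>_. True) (realization (K t)) (realization (K (\<alpha>' (\<alpha> t))))
             (G (\<alpha> t) \<circ> F t) id) \<and>
      (\<forall>t. homotopic_with (\<lambda>_. True) (realization (K' t)) (realization (K' (\<alpha> (\<alpha>' t))))
             (F (\<alpha>' t) \<circ> G t) id))"

end

theory Submission imports Defs begin
lemma istop_real: "istopology (\<lambda>U. U \<subseteq> realization_carrier K \<and>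
      (\<forall>\<sigma>\<in>K. openin (subtopology euclidean (geom_simplex \<sigma>)) (U \<inter> geom_simplex \<sigma>)))"
  unfolding istopology_def
proof (rule conjI; intro allI impI)
  fix S T assume S: "S \<subseteq> realization_carrier K \<and> (\<forall>\<sigma>\<in>K. openin (top_of_set (geom_simplex \<sigma>)) (S \<inter> geom_simplex \<sigma>))"
    and T: "T \<subseteq> realization_carrier K \<and> (\<forall>\<sigma>\<in>K. openin (top_of_set (geom_simplex \<sigma>)) (T \<inter> geom_simplex \<sigma>))"
  show "S \<inter> T \<subseteq> realization_carrier K \<and> (\<forall>\<sigma>\<in>K. openin (top_of_set (geom_simplex \<sigma>)) (S \<inter> T \<inter> geom_simplex \<sigma>))"
  proof (intro conjI ballI)
    show "S \<inter> T \<subseteq> realization_carrier K" using S by blast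
    fix \<sigma> assume "\<sigma> \<in> K"
    have "S \<inter> T \<inter> geom_simplex \<sigma> = (S \<inter> geom_simplex \<sigma>) \<inter> (T \<inter> geom_simplex \<sigma>)" by blast
    then show "openin (top_of_set (geom_simplex \<sigma>)) (S \<inter> T \<inter> geom_simplex \<sigma>)"
      using S T \<open>\<sigma> \<in> K\<close> by (metis openin_Int)
  qed
next
  fix KK :: "('a \<Rightarrow> real) set set"
  assume H: "\<forall>S\<in>KK. S \<subseteq> realization_carrier K \<and> (\<forall>\<sigma>\<in>K. openin (top_of_set (geom_simplex \<sigma>)) (S \<inter> geom_simplex \<sigma>))"
  show "\<Union>KK \<subseteq> realization_carrier K \<and> (\<forall>\<sigma>\<in>K. openin (top_of_set (geom_simplex \<sigma>)) (\<Union>KK \<inter> geom_simplex \<sigma>))"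
  proof (intro conjI ballI)
    show "\<Union>KK \<subseteq> realization_carrier K" using H by blast
    fix \<sigma> assume "\<sigma> \<in> K"
    have "\<Union>KK \<inter> geom_simplex \<sigma> = \<Union>((\<lambda>S. S \<inter> geom_simplex \<sigma>) ` KK)" by blast
    then show "openin (top_of_set (geom_simplex \<sigma>)) (\<Union>KK \<inter> geom_simplex \<sigma>)"
      using H \<open>\<sigma> \<in> K\<close> by (metis (no_types, lifting) imageE openin_Union)
  qed
qed

lemma openin_real: "openin (realization K) U \<longleftrightarrow> U \<subseteq> realization_carrier K \<and>
      (\<forall>\<sigma>\<in>K. openin (top_of_set (geom_simplex \<sigma>)) (U \<inter> geom_simplex \<sigma>))"
  unfolding realization_def using istop_real[of K] by simp

lemma simplex_sub_carrier: "\<sigma> \<in> K \<Longrightarrow> geom_simplex \<sigma> \<subseteq> realization_carrier K"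
  unfolding realization_carrier_def by blast

lemma topspace_real: "topspace (realization K) = realization_carrier K"
proof -
  have "openin (realization K) (realization_carrier K)"
    unfolding openin_real
  proof (intro conjI ballI)
    fix \<sigma> assume "\<sigma> \<in> K"
    then have "realization_carrier K \<inter> geom_simplex \<sigma> = topspace (top_of_set (geom_simplex \<sigma>))"
      using simplex_sub_carrier by auto
    then show "openin (top_of_set (geom_simplex \<sigma>)) (realization_carrier K \<inter> geom_simplex \<sigma>)"
      by (metis openin_topspace)
  qed simp
  then have "realization_carrier K \<subseteq> topspace (realization K)" by (rule openin_subset)
  moreover have "topspace (realization K) \<subseteq> realization_carrier K"
    using openin_topspace[of "realization K"] unfolding openin_real by blast
  ultimately show ?thesis by blast
qed

lemma cont_from_real:
  assumes "\<And>\<sigma>. \<sigma>\<in>K \<Longrightarrow> continuous_map (top_of_set (geom_simplex \<sigma>)) Y f"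
    and "\<And>x. x\<in>realization_carrier K \<Longrightarrow> f x \<in> topspace Y"
  shows "continuous_map (realization K) Y f"
  unfolding continuous_map_def topspace_real
proof (intro conjI allI impI)
  show "f \<in> realization_carrier K \<rightarrow> topspace Y" using assms(2) by blast
  fix U assume U: "openin Y U"
  show "openin (realization K) {x \<in> realization_carrier K. f x \<in> U}"
    unfolding openin_real
  proof (intro conjI ballI)
    fix \<sigma> assume s: "\<sigma> \<in> K"
    have "{x \<in> realization_carrier K. f x \<in> U} \<inter> geom_simplex \<sigma> = {x \<in> topspace (top_of_set (geom_simplex \<sigma>)). f x \<in> U}"
      using simplex_sub_carrier[OF s] by auto
    then show "openin (top_of_set (geom_simplex \<sigma>)) ({x \<in> realization_carrier K. f x \<in> U} \<inter> geom_simplex \<sigma>)"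
      using openin_continuous_map_preimage[OF assms(1)[OF s] U] by simp
  qed auto
qed

lemma incl_real: "\<tau> \<in> K \<Longrightarrow> continuous_map (top_of_set (geom_simplex \<tau>)) (realization K) (\<lambda>x. x)"
  unfolding continuous_map_def topspace_real
  using simplex_sub_carrier[of \<tau> K]
  by (auto simp: openin_real Int_commute Collect_conj_eq)

lemma into_real:
  assumes "\<tau> \<in> K" "continuous_on S g" "g ` S \<subseteq> geom_simplex \<tau>"
  shows "continuous_map (top_of_set S) (realization K) g"
proof -
  have "continuous_map (top_of_set S) (top_of_set (geom_simplex \<tau>)) g"
    using assms by (auto simp add: continuous_map_in_subtopology)
  from continuous_map_compose[OF this incl_real[OF assms(1)]] show ?thesis by (simp add: o_def)
qed

lemma cont_from_prod_real:
  assumes cont: "\<And>\<sigma>. \<sigma>\<in>K \<Longrightarrow> continuous_map (top_of_set ({0..1::real} \<times> geom_simplex \<sigma>)) Y h"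
    and top: "\<And>s x. s \<in> {0..1} \<Longrightarrow> x\<in>realization_carrier K \<Longrightarrow> h (s,x) \<in> topspace Y"
  shows "continuous_map (prod_topology (top_of_set {0..1}) (realization K)) Y h"
  unfolding continuous_map_def topspace_prod_topology topspace_real
proof (intro conjI allI impI)
  show "h \<in> topspace (top_of_set {0..1}) \<times> realization_carrier K \<rightarrow> topspace Y"
    using top by auto
  fix U assume U: "openin Y U"
  let ?W = "{p \<in> topspace (top_of_set {0..1::real}) \<times> realization_carrier K. h p \<in> U}"
  have Wsig: "openin (prod_topology (top_of_set {0..1}) (top_of_set (geom_simplex \<sigma>)))
      {p \<in> {0..1} \<times> geom_simplex \<sigma>. h p \<in> U}" if s: "\<sigma> \<in> K" for \<sigma>
    using openin_continuous_map_preimage[OF cont[OF s] U] by simp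
  show "openin (prod_topology (top_of_set {0..1}) (realization K)) ?W"
    unfolding openin_prod_topology_alt
  proof (intro allI impI)
    fix s0 x0 assume sx: "(s0, x0) \<in> ?W"
    then obtain \<sigma>0 where s0: "\<sigma>0 \<in> K" "x0 \<in> geom_simplex \<sigma>0"
      unfolding realization_carrier_def by auto
    have s01: "s0 \<in> {0..1}" using sx by auto
    have mem: "(s0,x0) \<in> {p \<in> {0..1} \<times> geom_simplex \<sigma>0. h p \<in> U}" using sx s0 by auto
    obtain U0 V0 where UV: "openin (top_of_set {0..1}) U0" "openin (top_of_set (geom_simplex \<sigma>0)) V0"
      "s0 \<in> U0" "x0 \<in> V0" "U0 \<times> V0 \<subseteq> {p \<in> {0..1} \<times> geom_simplex \<sigma>0. h p \<in> U}"
      using Wsig[OF s0(1), unfolded openin_prod_topology_alt, rule_format, OF mem] by blast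
    then obtain e where e: "e > 0" "\<And>x'. x' \<in> {0..1} \<Longrightarrow> dist x' s0 < e \<Longrightarrow> x' \<in> U0"
      unfolding openin_euclidean_subtopology_iff by meson
    define N where "N = {0..1::real} \<inter> cball s0 (e/2)"
    define A where "A = {0..1::real} \<inter> ball s0 (e/2)"
    define B where "B = {x \<in> realization_carrier K. \<forall>s\<in>N. h (s,x) \<in> U}"
    have NU0: "N \<subseteq> U0" unfolding N_def using e by (auto simp: dist_commute)
    have AN: "A \<subseteq> N" unfolding A_def N_def by auto
    have compN: "compactin (top_of_set {0..1}) N"
      unfolding N_def compactin_subtopology by (auto intro: compact_Int_closed)
    show "\<exists>A B. openin (top_of_set {0..1}) A \<and> openin (realization K) B \<and> s0 \<in> A \<and> x0 \<in> B \<and> A \<times> B \<subseteq> ?W"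
    proof (intro exI conjI)
      show "openin (top_of_set {0..1}) A" unfolding A_def by auto
      show "s0 \<in> A" unfolding A_def using s01 e by auto
      show "x0 \<in> B" unfolding B_def using s0 NU0 UV(4,5) simplex_sub_carrier[OF s0(1)] by blast
      show "A \<times> B \<subseteq> ?W" using AN unfolding B_def N_def by auto
      show "openin (realization K) B"
        unfolding openin_real
      proof (intro conjI ballI)
        show "B \<subseteq> realization_carrier K" unfolding B_def by auto
        fix \<sigma> assume s: "\<sigma> \<in> K"
        show "openin (top_of_set (geom_simplex \<sigma>)) (B \<inter> geom_simplex \<sigma>)"
          unfolding openin_subopen[of _ "B \<inter> geom_simplex \<sigma>"]
        proof
          fix y assume y: "y \<in> B \<inter> geom_simplex \<sigma>"
          have "N \<times> {y} \<subseteq> {p \<in> {0..1} \<times> geom_simplex \<sigma>. h p \<in> U}"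
            using y unfolding B_def N_def by auto
          then obtain U' V' where UV': "openin (top_of_set {0..1}) U'" "openin (top_of_set (geom_simplex \<sigma>)) V'"
            "N \<subseteq> U'" "y \<in> V'" "U' \<times> V' \<subseteq> {p \<in> {0..1} \<times> geom_simplex \<sigma>. h p \<in> U}"
            using tube_lemma_left[OF Wsig[OF s] compN, of y] y by auto
          have "V' \<subseteq> B \<inter> geom_simplex \<sigma>"
          proof
            fix v assume v: "v \<in> V'"
            then have "v \<in> geom_simplex \<sigma>" using UV'(2) openin_subset by force
            moreover have "\<forall>s\<in>N. h (s,v) \<in> U" using UV'(3,5) v by blast
            ultimately show "v \<in> B \<inter> geom_simplex \<sigma>" unfolding B_def using simplex_sub_carrier[OF s] by auto
          qed
          then show "\<exists>T. openin (top_of_set (geom_simplex \<sigma>)) T \<and> y \<in> T \<and> T \<subseteq> B \<inter> geom_simplex \<sigma>"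
            using UV' by blast
        qed
      qed
    qed
  qed
qed

lemma simplex_mono: "finite \<tau> \<Longrightarrow> \<sigma> \<subseteq> \<tau> \<Longrightarrow> geom_simplex \<sigma> \<subseteq> geom_simplex \<tau>"
proof
  fix f assume "finite \<tau>" "\<sigma> \<subseteq> \<tau>" "f \<in> geom_simplex \<sigma>"
  moreover have "sum f \<sigma> = sum f \<tau>"
    using calculation by (intro sum.mono_neutral_left) (auto simp: geom_simplex_def)
  ultimately show "f \<in> geom_simplex \<tau>" by (auto simp: geom_simplex_def)
qed

lemma simplex_convex:
  assumes "f \<in> geom_simplex \<tau>" "g \<in> geom_simplex \<tau>" "0 \<le> s" "s \<le> (1::real)"
  shows "(\<lambda>l. (1 - s) * f l + s * g l) \<in> geom_simplex \<tau>"
  using assms unfolding geom_simplex_def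
  by (auto simp: sum.distrib sum_distrib_left[symmetric])

definition linext :: "('a \<Rightarrow> 'b) \<Rightarrow> ('a \<Rightarrow> real) \<Rightarrow> ('b \<Rightarrow> real)" where
  "linext c f = (\<lambda>y. \<Sum>x\<in>{x. f x \<noteq> 0 \<and> c x = y}. f x)"

lemma linext_on:
  assumes "finite \<sigma>" "f \<in> geom_simplex \<sigma>"
  shows "linext c f y = (\<Sum>x\<in>{x\<in>\<sigma>. c x = y}. f x)"
  unfolding linext_def
  using assms by (intro sum.mono_neutral_left) (auto simp: geom_simplex_def)

lemma linext_maps:
  assumes "finite \<sigma>" "f \<in> geom_simplex \<sigma>"
  shows "linext c f \<in> geom_simplex (c ` \<sigma>)"
proof -
  have nn: "\<forall>x. 0 \<le> f x" "\<forall>x. x \<notin> \<sigma> \<longrightarrow> f x = 0" "sum f \<sigma> = 1"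
    using assms(2) by (auto simp: geom_simplex_def)
  have "(\<Sum>y\<in>c ` \<sigma>. linext c f y) = (\<Sum>y\<in>c ` \<sigma>. \<Sum>x\<in>{x\<in>\<sigma>. c x = y}. f x)"
    by (intro sum.cong refl) (rule linext_on[OF assms])
  also have "\<dots> = sum f \<sigma>"
    using sum.image_gen[OF assms(1), of f c] by simp
  finally have "sum (linext c f) (c ` \<sigma>) = 1" using nn by simp
  moreover have "\<forall>y. 0 \<le> linext c f y"
    using nn unfolding linext_def by (auto intro: sum_nonneg)
  moreover have "\<forall>y. y \<notin> c ` \<sigma> \<longrightarrow> linext c f y = 0"
  proof (intro allI impI)
    fix y assume "y \<notin> c ` \<sigma>"
    then have E: "{x\<in>\<sigma>. c x = y} = {}" by auto
    show "linext c f y = 0" unfolding linext_on[OF assms, of c y] E by simp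
  qed
  ultimately show ?thesis unfolding geom_simplex_def by blast
qed

lemma linext_cont:
  assumes "finite \<sigma>"
  shows "continuous_on (geom_simplex \<sigma>) (linext c)"
proof (rule continuous_on_coordinatewise_then_product)
  fix y
  have "continuous_on (geom_simplex \<sigma>) (\<lambda>f. \<Sum>x\<in>{x\<in>\<sigma>. c x = y}. f x)"
    by (intro continuous_on_sum ballI continuous_on_subset[OF continuous_on_product_coordinates]) auto
  then show "continuous_on (geom_simplex \<sigma>) (\<lambda>f. linext c f y)"
    by (rule continuous_on_cong[THEN iffD1, rotated 2]) (auto simp: linext_on[OF assms])
qed

lemma nerve_finite: "\<sigma> \<in> dowker_nerve \<Lambda> t \<Longrightarrow> finite \<sigma>"
  by (simp add: dowker_nerve_def)

lemma nerve_sub: "\<sigma> \<in> dowker_nerve \<Lambda> t \<Longrightarrow> \<tau> \<subseteq> \<sigma> \<Longrightarrow> \<tau> \<in> dowker_nerve \<Lambda> t"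
  unfolding dowker_nerve_def by (auto intro: finite_subset)

lemma nerve_mono: "s \<le> t \<Longrightarrow> \<sigma> \<in> dowker_nerve \<Lambda> s \<Longrightarrow> \<sigma> \<in> dowker_nerve \<Lambda> t"
  unfolding dowker_nerve_def by (auto intro: less_le_trans)

lemma nerve_empty: "{} \<in> dowker_nerve \<Lambda> t"
  unfolding dowker_nerve_def by auto

definition chooser :: "('a \<times> 'b) set \<Rightarrow> 'a \<Rightarrow> 'b" where
  "chooser C l = (SOME l'. (l, l') \<in> C)"

lemma ilD:
  assumes "dowker_interleaving \<Lambda> \<Lambda>' \<alpha> \<alpha>' C C'"
  shows ilD1: "\<sigma> \<in> dowker_nerve \<Lambda> t \<Longrightarrow> \<sigma> \<noteq> {} \<Longrightarrow> C `` \<sigma> \<in> dowker_nerve \<Lambda>' (\<alpha> t) \<and> C `` \<sigma> \<noteq> {}"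
    and ilD2: "\<tau> \<in> dowker_nerve \<Lambda>' t \<Longrightarrow> \<tau> \<noteq> {} \<Longrightarrow> C' `` \<tau> \<in> dowker_nerve \<Lambda> (\<alpha>' t)"
    and ilD3: "(l,l) \<in> C O C'"
proof -
  note A = assms[unfolded dowker_interleaving_def]
  show "\<sigma> \<in> dowker_nerve \<Lambda> t \<Longrightarrow> \<sigma> \<noteq> {} \<Longrightarrow> C `` \<sigma> \<in> dowker_nerve \<Lambda>' (\<alpha> t) \<and> C `` \<sigma> \<noteq> {}"
    using conjunct1[OF A] by blast
  show "\<tau> \<in> dowker_nerve \<Lambda>' t \<Longrightarrow> \<tau> \<noteq> {} \<Longrightarrow> C' `` \<tau> \<in> dowker_nerve \<Lambda> (\<alpha>' t)"
    using conjunct1[OF conjunct2[OF A]] by blast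
  have "Id \<subseteq> C O C'" using A by blast
  then show "(l,l) \<in> C O C'" by blast
qed

lemma chooser_in:
  assumes "dowker_interleaving \<Lambda> \<Lambda>' \<alpha> \<alpha>' C C'"
  shows "(l, chooser C l) \<in> C"
proof -
  have "(l,l) \<in> C O C'" by (rule ilD3[OF assms])
  then obtain l' where "(l,l') \<in> C" by blast
  then show ?thesis unfolding chooser_def by (rule someI)
qed

lemma interleaving_sym:
  "dowker_interleaving \<Lambda> \<Lambda>' \<alpha> \<alpha>' C C' \<Longrightarrow> dowker_interleaving \<Lambda>' \<Lambda> \<alpha>' \<alpha> C' C"
  unfolding dowker_interleaving_def by blast

lemma chooser_nerve:
  assumes I: "dowker_interleaving \<Lambda> \<Lambda>' \<alpha> \<alpha>' C C'" and s: "\<sigma> \<in> dowker_nerve \<Lambda> t"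
  shows "chooser C ` \<sigma> \<in> dowker_nerve \<Lambda>' (\<alpha> t)"
proof (cases "\<sigma> = {}")
  case True then show ?thesis by (simp add: nerve_empty)
next
  case False
  then have "C `` \<sigma> \<in> dowker_nerve \<Lambda>' (\<alpha> t)" using ilD1[OF I s] by blast
  moreover have "chooser C ` \<sigma> \<subseteq> C `` \<sigma>" using chooser_in[OF I] by blast
  ultimately show ?thesis by (rule nerve_sub)
qed

lemma contF:
  assumes I: "dowker_interleaving \<Lambda> \<Lambda>' \<alpha> \<alpha>' C C'" and st: "s \<le> t"
  shows "continuous_map (realization (dowker_nerve \<Lambda> s)) (realization (dowker_nerve \<Lambda>' (\<alpha> t))) (linext (chooser C))"
proof (rule cont_from_real)
  fix \<sigma> assume s: "\<sigma> \<in> dowker_nerve \<Lambda> s"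
  then have f: "finite \<sigma>" by (rule nerve_finite)
  have n: "chooser C ` \<sigma> \<in> dowker_nerve \<Lambda>' (\<alpha> t)" using chooser_nerve[OF I nerve_mono[OF st s]] .
  show "continuous_map (top_of_set (geom_simplex \<sigma>)) (realization (dowker_nerve \<Lambda>' (\<alpha> t))) (linext (chooser C))"
    by (rule into_real[OF n linext_cont[OF f]]) (use linext_maps[OF f] in blast)
next
  fix x assume "x \<in> realization_carrier (dowker_nerve \<Lambda> s)"
  then obtain \<sigma> where s: "\<sigma> \<in> dowker_nerve \<Lambda> s" "x \<in> geom_simplex \<sigma>" unfolding realization_carrier_def by blast
  have n: "chooser C ` \<sigma> \<in> dowker_nerve \<Lambda>' (\<alpha> t)" using chooser_nerve[OF I nerve_mono[OF st s(1)]] .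
  show "linext (chooser C) x \<in> topspace (realization (dowker_nerve \<Lambda>' (\<alpha> t)))"
    unfolding topspace_real using simplex_sub_carrier[OF n] linext_maps[OF nerve_finite[OF s(1)] s(2)] by blast
qed

lemma big_simplex:
  assumes I: "dowker_interleaving \<Lambda> \<Lambda>' \<alpha> \<alpha>' C C'" and s: "\<sigma> \<in> dowker_nerve \<Lambda> t"
  shows "\<sigma> \<union> chooser C' ` chooser C ` \<sigma> \<in> dowker_nerve \<Lambda> (\<alpha>' (\<alpha> t))"
proof (cases "\<sigma> = {}")
  case True then show ?thesis by (simp add: nerve_empty)
next
  case False
  then have 1: "C `` \<sigma> \<in> dowker_nerve \<Lambda>' (\<alpha> t)" "C `` \<sigma> \<noteq> {}" using ilD1[OF I s] by blast+
  then have "C' `` (C `` \<sigma>) \<in> dowker_nerve \<Lambda> (\<alpha>' (\<alpha> t))" using ilD2[OF I] by blast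
  moreover have "\<sigma> \<union> chooser C' ` chooser C ` \<sigma> \<subseteq> C' `` (C `` \<sigma>)"
  proof -
    have "\<sigma> \<subseteq> C' `` (C `` \<sigma>)"
    proof
      fix l assume "l \<in> \<sigma>"
      moreover have "(l,l) \<in> C O C'" by (rule ilD3[OF I])
      ultimately show "l \<in> C' `` (C `` \<sigma>)" by blast
    qed
    moreover have "chooser C' ` chooser C ` \<sigma> \<subseteq> C' `` (C `` \<sigma>)"
      using chooser_in[OF I] chooser_in[OF interleaving_sym[OF I]] by blast
    ultimately show ?thesis by blast
  qed
  ultimately show ?thesis by (rule nerve_sub)
qed

lemma homot:
  assumes I: "dowker_interleaving \<Lambda> \<Lambda>' \<alpha> \<alpha>' C C'"
  shows "homotopic_with (\<lambda>_. True) (realization (dowker_nerve \<Lambda> t)) (realization (dowker_nerve \<Lambda> (\<alpha>' (\<alpha> t))))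
             (linext (chooser C') \<circ> linext (chooser C)) id"
proof -
  let ?c = "chooser C" and ?c' = "chooser C'"
  define h where "h = (\<lambda>p::real \<times> _. \<lambda>l. (1 - fst p) * linext ?c' (linext ?c (snd p)) l + fst p * snd p l)"
  have hin: "h (s,x) \<in> geom_simplex (\<sigma> \<union> ?c' ` ?c ` \<sigma>)"
    if s: "\<sigma> \<in> dowker_nerve \<Lambda> t" and x: "x \<in> geom_simplex \<sigma>" and s01: "s \<in> {0..1}" for \<sigma> s x
  proof -
    have f: "finite \<sigma>" using nerve_finite[OF s] .
    have f2: "finite (\<sigma> \<union> ?c' ` ?c ` \<sigma>)" using f by simp
    have lx: "linext ?c x \<in> geom_simplex (?c ` \<sigma>)" by (rule linext_maps[OF f x])
    have "linext ?c' (linext ?c x) \<in> geom_simplex (?c' ` ?c ` \<sigma>)" using linext_maps[OF _ lx, of ?c'] f by simp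
    then have a: "linext ?c' (linext ?c x) \<in> geom_simplex (\<sigma> \<union> ?c' ` ?c ` \<sigma>)"
      using simplex_mono[OF f2, of "?c' ` ?c ` \<sigma>"] by blast
    have b: "x \<in> geom_simplex (\<sigma> \<union> ?c' ` ?c ` \<sigma>)" using simplex_mono[OF f2, of \<sigma>] x by blast
    show ?thesis unfolding h_def using simplex_convex[OF a b] s01 by simp
  qed
  have hc: "continuous_map (prod_topology (top_of_set {0..1}) (realization (dowker_nerve \<Lambda> t))) (realization (dowker_nerve \<Lambda> (\<alpha>' (\<alpha> t)))) h"
  proof (rule cont_from_prod_real)
    fix \<sigma> assume s: "\<sigma> \<in> dowker_nerve \<Lambda> t"
    have f: "finite \<sigma>" using nerve_finite[OF s] .
    have c1: "continuous_on ({0..1} \<times> geom_simplex \<sigma>) (\<lambda>p::real \<times> _. linext ?c' (linext ?c (snd p)))"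
    proof (rule continuous_on_compose2[OF linext_cont[of "?c ` \<sigma>"]])
      show "finite (?c ` \<sigma>)" using f by simp
      show "continuous_on ({0..1} \<times> geom_simplex \<sigma>) (\<lambda>p::real \<times> _. linext ?c (snd p))"
        by (rule continuous_on_compose2[OF linext_cont[OF f] continuous_on_snd[OF continuous_on_id]]) auto
      show "(\<lambda>p::real \<times> _. linext ?c (snd p)) ` ({0..1} \<times> geom_simplex \<sigma>) \<subseteq> geom_simplex (?c ` \<sigma>)"
        using linext_maps[OF f] by auto
    qed
    have "continuous_on ({0..1} \<times> geom_simplex \<sigma>) h"
      unfolding h_def
    proof (rule continuous_on_coordinatewise_then_product)
      fix l
      have "continuous_on ({0..1} \<times> geom_simplex \<sigma>) (\<lambda>p::real \<times> _. linext ?c' (linext ?c (snd p)) l)"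
        by (rule continuous_on_product_then_coordinatewise[OF c1])
      moreover have "continuous_on ({0..1} \<times> geom_simplex \<sigma>) (\<lambda>p::real \<times> _. snd p l)"
        by (rule continuous_on_product_then_coordinatewise[OF continuous_on_snd[OF continuous_on_id]])
      ultimately show "continuous_on ({0..1} \<times> geom_simplex \<sigma>)
          (\<lambda>p::real \<times> _. (1 - fst p) * linext ?c' (linext ?c (snd p)) l + fst p * snd p l)"
        by (intro continuous_intros) auto
    qed
    then show "continuous_map (top_of_set ({0..1} \<times> geom_simplex \<sigma>)) (realization (dowker_nerve \<Lambda> (\<alpha>' (\<alpha> t)))) h"
      by (rule into_real[OF big_simplex[OF I s]]) (auto intro: hin[OF s])
  next
    fix s x assume s01: "s \<in> {0..1::real}" and x: "x \<in> realization_carrier (dowker_nerve \<Lambda> t)"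
    then obtain \<sigma> where s: "\<sigma> \<in> dowker_nerve \<Lambda> t" "x \<in> geom_simplex \<sigma>" unfolding realization_carrier_def by blast
    show "h (s, x) \<in> topspace (realization (dowker_nerve \<Lambda> (\<alpha>' (\<alpha> t))))"
      unfolding topspace_real using hin[OF s s01] simplex_sub_carrier[OF big_simplex[OF I s(1)]] by blast
  qed
  have "h (0, x) = (linext ?c' \<circ> linext ?c) x" for x unfolding h_def by simp
  moreover have "h (1, x) = id x" for x unfolding h_def by simp
  ultimately show ?thesis unfolding homotopic_with_def using hc by blast
qed

theorem corollary7p13:
  fixes \<Lambda> :: "'l \<Rightarrow> 'w \<Rightarrow> ennreal" and \<Lambda>' :: "'l2 \<Rightarrow> 'w2 \<Rightarrow> ennreal"
    and \<alpha> \<alpha>' :: "ennreal \<Rightarrow> ennreal"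
  assumes "mono \<alpha>" and "mono \<alpha>'"
    and "\<And>t. t \<le> \<alpha> t" and "\<And>t. t \<le> \<alpha>' t"
    and "dowker_interleaved \<Lambda> \<Lambda>' \<alpha> \<alpha>'"
  shows "filtered_interleaved (dowker_nerve \<Lambda>) (dowker_nerve \<Lambda>') \<alpha> \<alpha>'"
proof -
  obtain C C' where I: "dowker_interleaving \<Lambda> \<Lambda>' \<alpha> \<alpha>' C C'"
    using assms(5) unfolding dowker_interleaved_def by blast
  note I' = interleaving_sym[OF I]
  show ?thesis
    unfolding filtered_interleaved_def
  proof (intro exI[of _ "\<lambda>t. linext (chooser C)"] exI[of _ "\<lambda>t. linext (chooser C')"] conjI allI impI)
    fix t
    show "continuous_map (realization (dowker_nerve \<Lambda> t)) (realization (dowker_nerve \<Lambda>' (\<alpha> t))) (linext (chooser C))"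
      by (rule contF[OF I order_refl])
    show "continuous_map (realization (dowker_nerve \<Lambda>' t)) (realization (dowker_nerve \<Lambda> (\<alpha>' t))) (linext (chooser C'))"
      by (rule contF[OF I' order_refl])
    show "homotopic_with (\<lambda>_. True) (realization (dowker_nerve \<Lambda> t)) (realization (dowker_nerve \<Lambda> (\<alpha>' (\<alpha> t))))
             (linext (chooser C') \<circ> linext (chooser C)) id"
      by (rule homot[OF I])
    show "homotopic_with (\<lambda>_. True) (realization (dowker_nerve \<Lambda>' t)) (realization (dowker_nerve \<Lambda>' (\<alpha> (\<alpha>' t))))
             (linext (chooser C) \<circ> linext (chooser C')) id"
      by (rule homot[OF I'])
  next
    fix s t :: ennreal assume "s \<le> t"
    then show "homotopic_with (\<lambda>_. True) (realization (dowker_nerve \<Lambda> s)) (realization (dowker_nerve \<Lambda>' (\<alpha> t))) (linext (chooser C)) (linext (chooser C))"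
      using contF[OF I] by simp
  next
    fix s t :: ennreal assume "s \<le> t"
    then show "homotopic_with (\<lambda>_. True) (realization (dowker_nerve \<Lambda>' s)) (realization (dowker_nerve \<Lambda> (\<alpha>' t))) (linext (chooser C')) (linext (chooser C'))"
      using contF[OF I'] by simp
  qed
qed

end
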